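(* Let $f$ be a generalized timelike minimal surface with real Weierstrass data $(g_1,g_2,\hat{\omega}_1du,\hat{\omega}_2dv)$, and let $p$ be a singular point with $\hat\omega_1\hat\omega_2(p)=0$ and $\operatorname{rank}(df_p)=1$. Then: (i) If $\hat\omega_1(p)=0$, then $f$ is a front at $p$ if and only if $(g_1)_u(p)\neq0$; if $\hat\omega_2(p)=0$, then $f$ is a front at $p$ if and only if $(g_2)_v(p)\neq0$. (ii) If $\hat\omega_1(p)=0$, then $p$ is non-degenerate if and only if $(\hat\omega_1)_u(p)\neq0$ and $g_1g_2(p)\neq1$; if $\hat\omega_2(p)=0$, then $p$ is non-degenerate if and only if $(\hat\omega_2)_v(p)\neq0$ and $g_1g_2(p)\neq1$.
   Context: $\mathbb{L}^3$ is $\mathbb{R}^3$ with the Lorentzian metric $\langle\,,\rangle=-dt^2+dx^2+dy^2$. A generalized timelike minimal surface is a non-constant smooth map $f\colon\Sigma\to\mathbb{L}^3$ from a 2-manifold which is an immersion on an open dense subset and such that near each point there are local coordinates $(u,v)$ with $\langle f_u,f_u\rangle=\langle f_v,f_v\rangle=0$ and $f_{uv}=0$. In such coordinates $f(u,v)=\tfrac12\int_{u_0}^u(-1-g_1^2,1-g_1^2,2g_1)\hat{\omega}_1du+\tfrac12\int_{v_0}^v(1+g_2^2,1-g_2^2,-2g_2)\hat{\omega}_2dv+f(u_0,v_0)$, with $g_1,\hat\omega_1$ functions of $u$ and $g_2,\hat\omega_2$ functions of $v$; this quadruple is the real Weierstrass data. Standing assumption: $g_1,g_2$ take finite real values at every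 singular point (point where $f$ is not an immersion). Such $f$ is a frontal with unit normal $n=(g_1+g_2,\,-g_1+g_2,\,1+g_1g_2)/\sqrt{(1-g_1g_2)^2+2(g_1+g_2)^2}$ (Euclidean-orthogonal to $df$); $f$ is a front at $p$ if $(f,n)$ is an immersion at $p$. The signed area density is $\lambda=\det(f_u,f_v,n)$, and a singular point $p$ is non-degenerate if $d\lambda_p\neq0$. *)

theory Defs
  imports "HOL-Analysis.Analysis"
begin

definition smooth_real_on :: "real set \<Rightarrow> (real \<Rightarrow> real) \<Rightarrow> bool" where
  "smooth_real_on S g \<longleftrightarrow> (\<forall>k. \<forall>x\<in>S. ((deriv ^^ k) g) differentiable (at x))"

definition nullU :: "real \<Rightarrow> real^3" where
  "nullU g1 = vector [-1 - g1^2, 1 - g1^2, 2 * g1]"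

definition nullV :: "real \<Rightarrow> real^3" where
  "nullV g2 = vector [1 + g2^2, 1 - g2^2, -2 * g2]"

text \<open>Unit normal (Euclidean) in terms of the values of g1, g2.\<close>
definition unit_normal :: "real \<Rightarrow> real \<Rightarrow> real^3" where
  "unit_normal a b = (1 / sqrt ((1 - a*b)^2 + 2*(a+b)^2)) *\<^sub>R vector [a + b, -a + b, 1 + a*b]"

definition immersion_at :: "(real \<times> real \<Rightarrow> 'b::real_normed_vector) \<Rightarrow> real \<times> real \<Rightarrow> bool" where
  "immersion_at F q \<longleftrightarrow> (\<exists>F'. (F has_derivative F') (at q) \<and> inj F')"

definition det3 :: "real^3 \<Rightarrow> real^3 \<Rightarrow> real^3 \<Rightarrow> real" where
  "det3 a b c = det (vector [a, b, c] :: real^3^3)"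

definition partial_u :: "(real \<times> real \<Rightarrow> real^3) \<Rightarrow> real \<times> real \<Rightarrow> real^3" where
  "partial_u F q = frechet_derivative F (at q) (1, 0)"

definition partial_v :: "(real \<times> real \<Rightarrow> real^3) \<Rightarrow> real \<times> real \<Rightarrow> real^3" where
  "partial_v F q = frechet_derivative F (at q) (0, 1)"

definition gen_timelike_min_surface ::
  "real set \<Rightarrow> real set \<Rightarrow> (real \<Rightarrow> real) \<Rightarrow> (real \<Rightarrow> real) \<Rightarrow> (real \<Rightarrow> real) \<Rightarrow> (real \<Rightarrow> real)
   \<Rightarrow> (real \<times> real \<Rightarrow> real^3) \<Rightarrow> bool" where
  "gen_timelike_min_surface I J g1 w1 g2 w2 f \<longleftrightarrow>
     open I \<and> open J \<and>
     smooth_real_on I g1 \<and> smooth_real_on I w1 \<and> smooth_real_on J g2 \<and> smooth_real_on J w2 \<and>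
     (\<exists>F1 F2. (\<forall>u\<in>I. (F1 has_vector_derivative ((1/2 * w1 u) *\<^sub>R nullU (g1 u))) (at u)) \<and>
              (\<forall>v\<in>J. (F2 has_vector_derivative ((1/2 * w2 v) *\<^sub>R nullV (g2 v))) (at v)) \<and>
              (\<forall>u\<in>I. \<forall>v\<in>J. f (u, v) = F1 u + F2 v)) \<and>
     (\<exists>W. open W \<and> W \<subseteq> I \<times> J \<and> I \<times> J \<subseteq> closure W \<and> (\<forall>q\<in>W. immersion_at f q))"

definition normal_of :: "(real \<Rightarrow> real) \<Rightarrow> (real \<Rightarrow> real) \<Rightarrow> real \<times> real \<Rightarrow> real^3" where
  "normal_of g1 g2 q = unit_normal (g1 (fst q)) (g2 (snd q))"

definition front_at :: "(real \<times> real \<Rightarrow> real^3) \<Rightarrow> (real \<times> real \<Rightarrow> real^3) \<Rightarrow> real \<times> real \<Rightarrow> bool" where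
  "front_at f n p \<longleftrightarrow> immersion_at (\<lambda>q. (f q, n q)) p"

definition area_density :: "(real \<times> real \<Rightarrow> real^3) \<Rightarrow> (real \<times> real \<Rightarrow> real^3) \<Rightarrow> real \<times> real \<Rightarrow> real" where
  "area_density f n q = det3 (partial_u f q) (partial_v f q) (n q)"

definition singular_point :: "(real \<times> real \<Rightarrow> real^3) \<Rightarrow> real \<times> real \<Rightarrow> bool" where
  "singular_point f p \<longleftrightarrow> \<not> immersion_at f p"

definition nondegenerate :: "(real \<times> real \<Rightarrow> real^3) \<Rightarrow> (real \<times> real \<Rightarrow> real^3) \<Rightarrow> real \<times> real \<Rightarrow> bool" where
  "nondegenerate f n p \<longleftrightarrow>
     (\<exists>L. (area_density f n has_derivative L) (at p) \<and> L \<noteq> (\<lambda>_. 0))"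

end

theory Submission
  imports Defs
begin

definition RR :: "real \<Rightarrow> real \<Rightarrow> real" where
  "RR a b = (1 - a*b)^2 + 2*(a+b)^2"

lemma RR_pos: "RR a b > 0"
proof -
  have "RR a b \<ge> 0" unfolding RR_def by simp
  moreover have "RR a b \<noteq> 0"
  proof
    assume "RR a b = 0"
    then have "(1-a*b)^2 = 0" "(a+b)^2 = 0" unfolding RR_def
      by (smt (verit) zero_le_power2)+
    then have "a*b = 1" "b = -a" by auto
    then have "-(a*a) = 1" by simp
    moreover have "a*a \<ge> 0" by simp
    ultimately show False by linarith
  qed
  ultimately show ?thesis by linarith
qed

definition "E1 = (vector[1,0,0]::real^3)"
definition "E2 = (vector[0,1,0]::real^3)"
definition "E3 = (vector[0,0,1]::real^3)"

lemma vec3: "(vector [x,y,z] :: real^3) = x *\<^sub>R E1 + y *\<^sub>R E2 + z *\<^sub>R E3"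
  by (simp add: vec_eq_iff forall_3 E1_def E2_def E3_def)

lemma det3_scale3: "det3 x y (t *\<^sub>R z) = t*det3 x y z"
  unfolding det3_def det_3 by (simp add: algebra_simps)

lemma det3_D: "det3 (nullU a) (nullV b) (unit_normal a b) = -2*(1-a*b)* sqrt (RR a b)"
proof -
  define s where "s = sqrt (RR a b)"
  have s: "s > 0" "s * s = RR a b" using RR_pos[of a b] unfolding s_def
    by (auto simp: real_sqrt_mult_self)
  have e: "det3 (nullU a) (nullV b) (vector [a + b, -a + b, 1 + a*b]) = -2*(1-a*b)*RR a b"
    unfolding det3_def det_3 nullU_def nullV_def RR_def
    by (simp add: algebra_simps power2_eq_square)
  have "det3 (nullU a) (nullV b) (unit_normal a b) = (1/s) * (-2*(1-a*b)*RR a b)"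
    unfolding unit_normal_def s_def[symmetric] RR_def[symmetric] det3_scale3 e ..
  also have "\<dots> = -2*(1-a*b)* s" using s by (simp add: field_simps flip: s(2))
  finally show ?thesis unfolding s_def .
qed

lemma det3_scale: "det3 (s *\<^sub>R x) (t *\<^sub>R y) z = s*t*det3 x y z"
  unfolding det3_def det_3 by (simp add: algebra_simps)

lemma c_deriv: "\<exists>c'. ((\<lambda>x. 1 / sqrt (RR (fst x) (snd x))) has_derivative c') (at (a,b))"
proof -
  have p: "(1 - a * b)^2 + 2 * (a + b)^2 > 0" using RR_pos[of a b] unfolding RR_def .
  show ?thesis unfolding RR_def
    apply (rule exI)
    apply (rule derivative_eq_intros refl | use p in simp)+
    done
qed

lemma Phi_deriv:
  obtains P where "((\<lambda>x. unit_normal (fst x) (snd x)) has_derivative P) (at (a,b))"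
    "\<And>h. P (h,0) = 0 \<Longrightarrow> h = 0" "\<And>k. P (0,k) = 0 \<Longrightarrow> k = 0"
proof -
  obtain c' where hc: "((\<lambda>x. 1/sqrt(RR (fst x)(snd x))) has_derivative c') (at (a,b))"
    using c_deriv by blast
  define V where "V x = (vector [fst x + snd x, - fst x + snd x, 1 + fst x * snd x] :: real^3)" for x
  define V' where "V' z = (fst z + snd z) *\<^sub>R E1 + (snd z - fst z) *\<^sub>R E2
      + (fst z * b + a * snd z) *\<^sub>R E3" for z :: "real \<times> real"
  have hV: "(V has_derivative V') (at (a,b))" unfolding V_def V'_def vec3
    by (rule derivative_eq_intros refl | simp)+ (simp add: fun_eq_iff algebra_simps)
  have eq: "(\<lambda>x. unit_normal (fst x) (snd x)) = (\<lambda>x. (1/sqrt(RR (fst x)(snd x))) *\<^sub>R V x)"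
    unfolding unit_normal_def RR_def V_def by auto
  define cc where "cc = 1/sqrt(RR a b)"
  have cc: "cc > 0" unfolding cc_def using RR_pos[of a b] by simp
  have hP: "((\<lambda>x. unit_normal (fst x) (snd x)) has_derivative (\<lambda>z. cc *\<^sub>R V' z + c' z *\<^sub>R V (a,b))) (at (a,b))"
    unfolding eq cc_def using has_derivative_scaleR[OF hc hV] by simp
  show ?thesis
  proof (rule that[OF hP])
    fix h assume "cc *\<^sub>R V' (h, 0) + c' (h, 0) *\<^sub>R V (a, b) = 0"
    then have "(cc *\<^sub>R V' (h, 0) + c' (h, 0) *\<^sub>R V (a, b)) $ i = 0" for i by simp
    from this[of 1] this[of 2] this[of 3]
    have e: "cc*h + c' (h,0) * (a+b) = 0" "cc*(-h) + c' (h,0) * (-a+b) = 0"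
      "cc*(h*b) + c' (h,0)*(1+a*b) = 0"
      unfolding V'_def V_def by (simp_all add: algebra_simps E1_def E2_def E3_def)
    show "h = 0"
    proof (cases "c' (h,0) = 0")
      case True then show ?thesis using e(1) cc by simp
    next
      case False
      have "2 * b * c' (h,0) = (cc*h + c' (h,0) * (a+b)) + (cc*(-h) + c' (h,0) * (-a+b))"
        by (simp add: algebra_simps)
      then have "2 * b * c' (h,0) = 0" using e(1) e(2) by simp
      then have "b = 0" using False by simp
      then show ?thesis using e(3) False by simp
    qed
  next
    fix k assume "cc *\<^sub>R V' (0, k) + c' (0, k) *\<^sub>R V (a, b) = 0"
    then have "(cc *\<^sub>R V' (0, k) + c' (0, k) *\<^sub>R V (a, b)) $ i = 0" for i by simp
    from this[of 1] this[of 2] this[of 3]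
    have e: "cc*k + c' (0,k) * (a+b) = 0" "cc*k + c' (0,k) * (-a+b) = 0"
      "cc*(a*k) + c' (0,k)*(1+a*b) = 0"
      unfolding V'_def V_def by (simp_all add: algebra_simps E1_def E2_def E3_def)
    show "k = 0"
    proof (cases "c' (0,k) = 0")
      case True then show ?thesis using e(1) cc by simp
    next
      case False
      have "2 * a * c' (0,k) = (cc*k + c' (0,k) * (a+b)) - (cc*k + c' (0,k) * (-a+b))"
        by (simp add: algebra_simps)
      then have "2 * a * c' (0,k) = 0" using e(1) e(2) by simp
      then have "a = 0" using False by simp
      then show ?thesis using e(3) False by simp
    qed
  qed
qed

lemma E0_deriv: "\<exists>e. ((\<lambda>x. -(1/2) * (1 - fst x * snd x) * sqrt (RR (fst x) (snd x))) has_derivative e) (at (a,b))"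
proof -
  have p: "(1 - a * b)^2 + 2 * (a + b)^2 > 0" using RR_pos[of a b] unfolding RR_def .
  show ?thesis unfolding RR_def
    apply (rule exI)
    apply (rule derivative_eq_intros refl | use p in simp)+
    done
qed

lemma comp_fst: "(g has_real_derivative d) (at (fst p)) \<Longrightarrow>
   ((\<lambda>q. g (fst q)) has_derivative (\<lambda>z. d * fst z)) (at p)"
  using has_derivative_compose[OF has_derivative_fst[OF has_derivative_ident, of "at p"], of g "(*) d"]
  by (simp add: has_field_derivative_def mult.commute)

lemma comp_snd: "(g has_real_derivative d) (at (snd p)) \<Longrightarrow>
   ((\<lambda>q. g (snd q)) has_derivative (\<lambda>z. d * snd z)) (at p)"
  using has_derivative_compose[OF has_derivative_snd[OF has_derivative_ident, of "at p"], of g "(*) d"]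
  by (simp add: has_field_derivative_def mult.commute)

lemma immersion_iff: "(F has_derivative D) (at q) \<Longrightarrow> immersion_at F q \<longleftrightarrow> inj D"
  unfolding immersion_at_def using has_derivative_unique by blast

lemma smooth_deriv: "smooth_real_on S g \<Longrightarrow> x \<in> S \<Longrightarrow> (g has_real_derivative deriv g x) (at x)"
  unfolding smooth_real_on_def
  by (metis DERIV_deriv_iff_real_differentiable funpow_0)

lemma nullU_nz: "nullU a \<noteq> 0"
proof
  assume "nullU a = 0"
  then have "nullU a $ 1 = 0" by simp
  then have "-1 - a^2 = 0" unfolding nullU_def by simp
  moreover have "a^2 \<ge> 0" by simp
  ultimately show False by linarith
qed

lemma nullV_nz: "nullV a \<noteq> 0"
proof
  assume "nullV a = 0"
  then have "nullV a $ 1 = 0" by simp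
  then have "1 + a^2 = 0" unfolding nullV_def by simp
  moreover have "a^2 \<ge> 0" by simp
  ultimately show False by linarith
qed

theorem lemma4p1:
  fixes I J :: "real set" and g1 w1 g2 w2 :: "real \<Rightarrow> real"
    and f :: "real \<times> real \<Rightarrow> real^3" and u0 v0 :: real
  assumes surf: "gen_timelike_min_surface I J g1 w1 g2 w2 f"
    and pI: "u0 \<in> I" and pJ: "v0 \<in> J"
    and sing: "singular_point f (u0, v0)"
    and w: "w1 u0 * w2 v0 = 0"
    and rank: "dim (range (frechet_derivative f (at (u0, v0)))) = 1"
  shows "(w1 u0 = 0 \<longrightarrow> (front_at f (normal_of g1 g2) (u0, v0) \<longleftrightarrow> deriv g1 u0 \<noteq> 0))
       \<and> (w2 v0 = 0 \<longrightarrow> (front_at f (normal_of g1 g2) (u0, v0) \<longleftrightarrow> deriv g2 v0 \<noteq> 0))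
       \<and> (w1 u0 = 0 \<longrightarrow> (nondegenerate f (normal_of g1 g2) (u0, v0)
                          \<longleftrightarrow> deriv w1 u0 \<noteq> 0 \<and> g1 u0 * g2 v0 \<noteq> 1))
       \<and> (w2 v0 = 0 \<longrightarrow> (nondegenerate f (normal_of g1 g2) (u0, v0)
                          \<longleftrightarrow> deriv w2 v0 \<noteq> 0 \<and> g1 u0 * g2 v0 \<noteq> 1))"
proof -
  define p where "p = (u0, v0)"
  have oI: "open I" and oJ: "open J" and sg1: "smooth_real_on I g1" and sw1: "smooth_real_on I w1"
    and sg2: "smooth_real_on J g2" and sw2: "smooth_real_on J w2"
    using surf unfolding gen_timelike_min_surface_def by auto
  obtain F1 F2 where hF1: "\<forall>u\<in>I. (F1 has_vector_derivative ((1/2 * w1 u) *\<^sub>R nullU (g1 u))) (at u)"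
    and hF2: "\<forall>v\<in>J. (F2 has_vector_derivative ((1/2 * w2 v) *\<^sub>R nullV (g2 v))) (at v)"
    and feq: "\<forall>u\<in>I. \<forall>v\<in>J. f (u, v) = F1 u + F2 v"
    using surf unfolding gen_timelike_min_surface_def by blast
  define A where "A u = (1/2 * w1 u) *\<^sub>R nullU (g1 u)" for u
  define B where "B v = (1/2 * w2 v) *\<^sub>R nullV (g2 v)" for v
  have oIJ: "open (I \<times> J)" using oI oJ by (simp add: open_Times)
  have fder: "(f has_derivative (\<lambda>z. fst z *\<^sub>R A u + snd z *\<^sub>R B v)) (at (u,v))"
    if uv: "u \<in> I" "v \<in> J" for u v
  proof -
    have d1: "((\<lambda>q. F1 (fst q)) has_derivative (\<lambda>z. fst z *\<^sub>R A u)) (at (u,v))"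
      using has_derivative_compose[OF has_derivative_fst[OF has_derivative_ident, of "at (u,v)"],
          of F1 "\<lambda>x. x *\<^sub>R A u"] hF1 uv unfolding A_def has_vector_derivative_def by simp
    have d2: "((\<lambda>q. F2 (snd q)) has_derivative (\<lambda>z. snd z *\<^sub>R B v)) (at (u,v))"
      using has_derivative_compose[OF has_derivative_snd[OF has_derivative_ident, of "at (u,v)"],
          of F2 "\<lambda>x. x *\<^sub>R B v"] hF2 uv unfolding B_def has_vector_derivative_def by simp
    have "((\<lambda>q. F1 (fst q) + F2 (snd q)) has_derivative (\<lambda>z. fst z *\<^sub>R A u + snd z *\<^sub>R B v)) (at (u,v))"
      using has_derivative_add[OF d1 d2] .
    then show ?thesis
      by (rule has_derivative_transform_within_open[OF _ oIJ]) (use uv feq in auto)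
  qed
  have pu: "partial_u f (u,v) = A u" and pv: "partial_v f (u,v) = B v" if "u \<in> I" "v \<in> J" for u v
    unfolding partial_u_def partial_v_def frechet_derivative_at[OF fder[OF that], symmetric] by simp_all
  define Df where "Df z = fst z *\<^sub>R A u0 + snd z *\<^sub>R B v0" for z :: "real \<times> real"
  have fp: "(f has_derivative Df) (at p)" unfolding p_def Df_def using fder pI pJ by blast
  have notboth: "\<not> (A u0 = 0 \<and> B v0 = 0)"
  proof
    assume "A u0 = 0 \<and> B v0 = 0"
    then have "range (frechet_derivative f (at (u0, v0))) \<subseteq> {0}"
      unfolding frechet_derivative_at[OF fp[unfolded p_def], symmetric] Df_def by auto
    then have "dim (range (frechet_derivative f (at (u0, v0)))) = 0" by simp
    then show False using rank by simp
  qed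
  have A0: "A u = 0 \<longleftrightarrow> w1 u = 0" for u unfolding A_def using nullU_nz by simp
  have B0: "B v = 0 \<longleftrightarrow> w2 v = 0" for v unfolding B_def using nullV_nz by simp
  define d1 where "d1 = deriv g1 u0"
  define d2 where "d2 = deriv g2 v0"
  have hg1: "((\<lambda>q. g1 (fst q)) has_derivative (\<lambda>z. d1 * fst z)) (at p)"
    using comp_fst[of g1 d1 p] smooth_deriv[OF sg1 pI] unfolding d1_def p_def by simp
  have hg2: "((\<lambda>q. g2 (snd q)) has_derivative (\<lambda>z. d2 * snd z)) (at p)"
    using comp_snd[of g2 d2 p] smooth_deriv[OF sg2 pJ] unfolding d2_def p_def by simp
  have hG: "((\<lambda>q. (g1 (fst q), g2 (snd q))) has_derivative (\<lambda>z. (d1 * fst z, d2 * snd z))) (at p)"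
    using has_derivative_Pair[OF hg1 hg2] .
  obtain P where hP: "((\<lambda>x. unit_normal (fst x) (snd x)) has_derivative P) (at (g1 u0, g2 v0))"
    and P1: "\<And>h. P (h,0) = 0 \<Longrightarrow> h = 0" and P2: "\<And>k. P (0,k) = 0 \<Longrightarrow> k = 0"
    using Phi_deriv by blast
  have linP: "linear P" using has_derivative_linear[OF hP] .
  have nP: "(normal_of g1 g2 has_derivative (\<lambda>z. P (d1 * fst z, d2 * snd z))) (at p)"
    using has_derivative_compose[OF hG, of "\<lambda>x. unit_normal (fst x) (snd x)" P] hP
    unfolding p_def normal_of_def by (simp add: fun_eq_iff)
  define D where "D z = (Df z, P (d1 * fst z, d2 * snd z))" for z
  have hD: "((\<lambda>q. (f q, normal_of g1 g2 q)) has_derivative D) (at p)"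
    unfolding D_def using has_derivative_Pair[OF fp nP] .
  have front: "front_at f (normal_of g1 g2) p \<longleftrightarrow> inj D"
    unfolding front_at_def using immersion_iff[OF hD] .
  have P00: "P (0,0) = 0" using linear_0[OF linP] by (simp add: zero_prod_def)
  have Pdiff: "P (x1, y1) - P (x2, y2) = P (x1 - x2, y1 - y2)" for x1 y1 x2 y2
    using linear_diff[OF linP, of "(x1,y1)" "(x2,y2)"] by simp
  have part1: "w1 u0 = 0 \<longrightarrow> (front_at f (normal_of g1 g2) p \<longleftrightarrow> d1 \<noteq> 0)"
  proof
    assume w10: "w1 u0 = 0"
    then have Az: "A u0 = 0" using A0 by simp
    then have Bnz: "B v0 \<noteq> 0" using notboth by simp
    show "front_at f (normal_of g1 g2) p \<longleftrightarrow> d1 \<noteq> 0"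
    proof
      assume fr: "front_at f (normal_of g1 g2) p"
      show "d1 \<noteq> 0"
      proof
        assume "d1 = 0"
        then have "D (1,0) = D (0,0)" unfolding D_def Df_def using Az P00 by simp
        then show False using fr front unfolding inj_def by (metis prod.inject zero_neq_one)
      qed
    next
      assume d1: "d1 \<noteq> 0"
      have "inj D"
      proof (rule injI)
        fix x y assume "D x = D y"
        then have e1: "snd x *\<^sub>R B v0 = snd y *\<^sub>R B v0"
          and e2: "P (d1 * fst x, d2 * snd x) = P (d1 * fst y, d2 * snd y)"
          unfolding D_def Df_def using Az by auto
        from e1 Bnz have s: "snd x = snd y" by simp
        from e2 have "P (d1 * fst x - d1 * fst y, d2 * snd x - d2 * snd y) = 0"
          using Pdiff by (metis right_minus_eq)
        then have "P (d1 * fst x - d1 * fst y, 0) = 0" using s by simp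
        from P1[OF this] have "d1 * fst x - d1 * fst y = 0" .
        then have "fst x = fst y" using d1 by (simp add: right_diff_distrib[symmetric])
        with s show "x = y" by (simp add: prod_eq_iff)
      qed
      then show "front_at f (normal_of g1 g2) p" using front by simp
    qed
  qed
  have part2: "w2 v0 = 0 \<longrightarrow> (front_at f (normal_of g1 g2) p \<longleftrightarrow> d2 \<noteq> 0)"
  proof
    assume w20: "w2 v0 = 0"
    then have Bz: "B v0 = 0" using B0 by simp
    then have Anz: "A u0 \<noteq> 0" using notboth by simp
    show "front_at f (normal_of g1 g2) p \<longleftrightarrow> d2 \<noteq> 0"
    proof
      assume fr: "front_at f (normal_of g1 g2) p"
      show "d2 \<noteq> 0"
      proof
        assume "d2 = 0"
        then have "D (0,1) = D (0,0)" unfolding D_def Df_def using Bz P00 by simp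
        then show False using fr front unfolding inj_def by (metis prod.inject zero_neq_one)
      qed
    next
      assume d2: "d2 \<noteq> 0"
      have "inj D"
      proof (rule injI)
        fix x y assume "D x = D y"
        then have e1: "fst x *\<^sub>R A u0 = fst y *\<^sub>R A u0"
          and e2: "P (d1 * fst x, d2 * snd x) = P (d1 * fst y, d2 * snd y)"
          unfolding D_def Df_def using Bz by auto
        from e1 Anz have s: "fst x = fst y" by simp
        from e2 have "P (d1 * fst x - d1 * fst y, d2 * snd x - d2 * snd y) = 0"
          using Pdiff by (metis right_minus_eq)
        then have "P (0, d2 * snd x - d2 * snd y) = 0" using s by simp
        from P2[OF this] have "d2 * snd x - d2 * snd y = 0" .
        then have "snd x = snd y" using d2 by (simp add: right_diff_distrib[symmetric])
        with s show "x = y" by (simp add: prod_eq_iff)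
      qed
      then show "front_at f (normal_of g1 g2) p" using front by simp
    qed
  qed
  define E0 where "E0 x = -(1/2) * (1 - fst x * snd x) * sqrt (RR (fst x) (snd x))" for x :: "real \<times> real"
  obtain e where he: "(E0 has_derivative e) (at (g1 u0, g2 v0))"
    using E0_deriv unfolding E0_def by blast
  have hE: "((\<lambda>q. E0 (g1 (fst q), g2 (snd q))) has_derivative (\<lambda>z. e (d1 * fst z, d2 * snd z))) (at p)"
    using has_derivative_compose[OF hG, of E0 e] he unfolding p_def by simp
  define e1 where "e1 = deriv w1 u0"
  define e2 where "e2 = deriv w2 v0"
  have hw1: "((\<lambda>q. w1 (fst q)) has_derivative (\<lambda>z. e1 * fst z)) (at p)"
    using comp_fst[of w1 e1 p] smooth_deriv[OF sw1 pI] unfolding e1_def p_def by simp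
  have hw2: "((\<lambda>q. w2 (snd q)) has_derivative (\<lambda>z. e2 * snd z)) (at p)"
    using comp_snd[of w2 e2 p] smooth_deriv[OF sw2 pJ] unfolding e2_def p_def by simp
  have hW: "((\<lambda>q. w1 (fst q) * w2 (snd q)) has_derivative (\<lambda>z. w1 u0 * (e2 * snd z) + e1 * fst z * w2 v0)) (at p)"
    using has_derivative_mult[OF hw1 hw2] unfolding p_def by simp
  define E0p where "E0p = E0 (g1 u0, g2 v0)"
  define L where "L z = (w1 u0 * w2 v0) * e (d1 * fst z, d2 * snd z) + (w1 u0 * (e2 * snd z) + e1 * fst z * w2 v0) * E0p" for z
  have hL0: "((\<lambda>q. (w1 (fst q) * w2 (snd q)) * E0 (g1 (fst q), g2 (snd q))) has_derivative L) (at p)"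
    using has_derivative_mult[OF hW hE] unfolding L_def p_def E0p_def by simp
  have adeq: "(w1 (fst q) * w2 (snd q)) * E0 (g1 (fst q), g2 (snd q)) = area_density f (normal_of g1 g2) q"
    if qIJ: "q \<in> I \<times> J" for q
  proof -
    obtain u v where q: "q = (u,v)" "u \<in> I" "v \<in> J" using qIJ by (cases q) auto
    show ?thesis unfolding q(1) area_density_def pu[OF q(2,3)] pv[OF q(2,3)] normal_of_def A_def B_def
      det3_scale E0_def by (simp add: det3_D algebra_simps)
  qed
  have pIJ: "p \<in> I \<times> J" unfolding p_def using pI pJ by simp
  have hL: "(area_density f (normal_of g1 g2) has_derivative L) (at p)"
    using has_derivative_transform_within_open[OF hL0 oIJ pIJ] adeq by blast
  have nd: "nondegenerate f (normal_of g1 g2) p \<longleftrightarrow> L \<noteq> (\<lambda>_. 0)"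
    unfolding nondegenerate_def using hL has_derivative_unique by blast
  have E0nz: "E0p \<noteq> 0 \<longleftrightarrow> g1 u0 * g2 v0 \<noteq> 1"
    unfolding E0p_def E0_def using RR_pos[of "g1 u0" "g2 v0"] by simp
  have part3: "w1 u0 = 0 \<longrightarrow> (nondegenerate f (normal_of g1 g2) p \<longleftrightarrow> e1 \<noteq> 0 \<and> g1 u0 * g2 v0 \<noteq> 1)"
  proof
    assume w10: "w1 u0 = 0"
    then have "w2 v0 \<noteq> 0" using notboth A0 B0 by blast
    have Lz: "L z = fst z * (e1 * w2 v0 * E0p)" for z unfolding L_def w10 by simp
    show "nondegenerate f (normal_of g1 g2) p \<longleftrightarrow> e1 \<noteq> 0 \<and> g1 u0 * g2 v0 \<noteq> 1"
    proof (cases "e1 * w2 v0 * E0p = 0")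
      case True
      then have "L = (\<lambda>_. 0)" using Lz by (simp add: fun_eq_iff)
      then show ?thesis using nd True E0nz \<open>w2 v0 \<noteq> 0\<close> by auto
    next
      case False
      then have "L (1,0) \<noteq> 0" using Lz by simp
      then have "L \<noteq> (\<lambda>_. 0)" by auto
      then show ?thesis using nd False E0nz by auto
    qed
  qed
  have part4: "w2 v0 = 0 \<longrightarrow> (nondegenerate f (normal_of g1 g2) p \<longleftrightarrow> e2 \<noteq> 0 \<and> g1 u0 * g2 v0 \<noteq> 1)"
  proof
    assume w20: "w2 v0 = 0"
    then have "w1 u0 \<noteq> 0" using notboth A0 B0 by blast
    have Lz: "L z = snd z * (w1 u0 * e2 * E0p)" for z unfolding L_def w20 by (simp add: algebra_simps)
    show "nondegenerate f (normal_of g1 g2) p \<longleftrightarrow> e2 \<noteq> 0 \<and> g1 u0 * g2 v0 \<noteq> 1"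
    proof (cases "w1 u0 * e2 * E0p = 0")
      case True
      then have "L = (\<lambda>_. 0)" using Lz by (simp add: fun_eq_iff)
      then show ?thesis using nd True E0nz \<open>w1 u0 \<noteq> 0\<close> by auto
    next
      case False
      then have "L (0,1) \<noteq> 0" using Lz by simp
      then have "L \<noteq> (\<lambda>_. 0)" by auto
      then show ?thesis using nd False E0nz by auto
    qed
  qed
  show ?thesis using part1 part2 part3 part4 unfolding p_def d1_def d2_def e1_def e2_def by blast
qed

end
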